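(* For any finite nonempty sets $X,Y,Z,W \subseteq \mathbb{Z}$, \[ |X+Y| \;\le\; \frac{|X+Z|\cdot|Z+W|\cdot|W+Y|}{|Z|\cdot|W|}. \]
   Context: For sets $P,Q\subseteq\mathbb{Z}$, $P+Q=\{p+q : p\in P,\ q\in Q\}$. *)

theory Defs
  imports Complex_Main
begin

definition sumset :: "int set \<Rightarrow> int set \<Rightarrow> int set" where
  "sumset P Q = {p + q | p q. p \<in> P \<and> q \<in> Q}"

end

theory Submission
  imports Defs
begin

lemma sumset_img: "sumset P Q = (\<lambda>(p,q). p + q) ` (P \<times> Q)"
  unfolding sumset_def by auto

lemma fin_sumset: "finite P \<Longrightarrow> finite Q \<Longrightarrow> finite (sumset P Q)"
  unfolding sumset_img by auto

lemma key:
  fixes X Y Z W :: "int set"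
  assumes "finite X" "finite Y" "finite Z" "finite W"
  shows "card (sumset X Y) * card Z * card W \<le>
    card (sumset X Z) * card (sumset Z W) * card (sumset W Y)"
proof -
  define px where "px s = (SOME p. p \<in> X \<and> s - p \<in> Y)" for s
  have px: "px s \<in> X \<and> s - px s \<in> Y" if "s \<in> sumset X Y" for s
  proof -
    from that obtain p q where "s = p + q" "p \<in> X" "q \<in> Y" unfolding sumset_def by auto
    hence "\<exists>p. p \<in> X \<and> s - p \<in> Y" by auto
    thus ?thesis unfolding px_def by (rule someI_ex)
  qed
  define f where "f = (\<lambda>(s::int,z::int,w::int). (px s + z, z + w, w + s - px s))"
  have inj: "inj_on f (sumset X Y \<times> Z \<times> W)"
  proof (rule inj_onI)
    fix u v assume "u \<in> sumset X Y \<times> Z \<times> W" "v \<in> sumset X Y \<times> Z \<times> W" "f u = f v"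
    obtain s z w where u: "u = (s,z,w)" by (cases u) auto
    obtain s' z' w' where v: "v = (s',z',w')" by (cases v) auto
    from \<open>f u = f v\<close> have e: "px s + z = px s' + z'" "z + w = z' + w'" "w + s - px s = w' + s' - px s'"
      unfolding u v f_def by auto
    hence "s = s'" by (simp add: algebra_simps)
    with e show "u = v" unfolding u v by auto
  qed
  have img: "f ` (sumset X Y \<times> Z \<times> W) \<subseteq> sumset X Z \<times> sumset Z W \<times> sumset W Y"
  proof
    fix t assume "t \<in> f ` (sumset X Y \<times> Z \<times> W)"
    then obtain s z w where t: "t = f (s,z,w)" and s: "s \<in> sumset X Y" and zw: "z \<in> Z" "w \<in> W" by auto
    from px[OF s] have a: "px s \<in> X" and b: "s - px s \<in> Y" by auto
    have 1: "px s + z \<in> sumset X Z" unfolding sumset_def using a zw by blast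
    have 2: "z + w \<in> sumset Z W" unfolding sumset_def using zw by blast
    have 3: "w + (s - px s) \<in> sumset W Y" unfolding sumset_def using b zw by blast
    have "t = (px s + z, z + w, w + (s - px s))" unfolding t f_def by simp
    thus "t \<in> sumset X Z \<times> sumset Z W \<times> sumset W Y" using 1 2 3 by simp
  qed
  have "card (sumset X Y \<times> Z \<times> W) \<le> card (sumset X Z \<times> sumset Z W \<times> sumset W Y)"
    by (rule card_inj_on_le[OF inj img]) (simp add: fin_sumset assms)
  thus ?thesis by (simp add: card_cartesian_product mult.assoc)
qed

theorem mainTheorem1:
  fixes X Y Z W :: "int set"
  assumes "finite X" "finite Y" "finite Z" "finite W"
    and "X \<noteq> {}" "Y \<noteq> {}" "Z \<noteq> {}" "W \<noteq> {}"
  shows "real (card (sumset X Y)) \<le>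
    real (card (sumset X Z)) * real (card (sumset Z W)) * real (card (sumset W Y))
      / (real (card Z) * real (card W))"
proof -
  have "card Z > 0" using assms(3,7) by (simp add: card_gt_0_iff)
  moreover have "card W > 0" using assms(4,8) by (simp add: card_gt_0_iff)
  ultimately have pz: "real (card Z) > 0" "real (card W) > 0" by simp_all
  have "real (card (sumset X Y) * card Z * card W) \<le>
    real (card (sumset X Z) * card (sumset Z W) * card (sumset W Y))"
    using key[OF assms(1-4)] by (simp only: of_nat_le_iff)
  hence "real (card (sumset X Y)) * (real (card Z) * real (card W)) \<le>
    real (card (sumset X Z)) * real (card (sumset Z W)) * real (card (sumset W Y))"
    by (simp only: of_nat_mult mult.assoc)
  moreover have "real (card Z) * real (card W) > 0" using pz by simp
  ultimately show ?thesis by (simp only: pos_le_divide_eq)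
qed

end
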